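(* Let $N\ge2$ and consider the opinion process on the one-dimensional graph with vertices labelled $0,1,\dots,N$ (vertex $k$ corresponding to the point $k/N$), boundary vertices $0$ and $N$ with boundary opinions $T_-:=T_0$ and $T_+:=T_N$, internal vertices $1,\dots,N-1$, and edges $\{k,k+1\}$ for $k=1,\dots,N-1$ oriented from $k$ to $k+1$ together with the edge from $1$ to $0$. Let $O^{\mathrm{stat}}=(O^{\mathrm{stat}}_k)_{k=0}^N$ be distributed according to the invariant measure $\nu^O$ of this process, and let $m(x):=T_-+x(T_+-T_-)$. Then for every $\epsilon>0$ and every continuous $\psi:[0,1]\to\mathbb R$, $\lim_{N\to\infty}\mathbb P_{\nu^O}\left(\left|\frac1N\sum_{k=0}^N\psi(k/N)O^{\mathrm{stat}}_k-\int_0^1\psi(x)m(x)\,dx\right|>\epsilon\right)=0.$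
   Context: Opinion process on a finite oriented graph $(\overline{\mathbb V},\overline E)$ with internal vertices $\mathbb V$, boundary vertices $\partial\mathbb V$, boundary edges oriented $ij$ with $i\in\mathbb V$, $j\in\partial\mathbb V$, and fixed boundary values $T_j>0$: the Markov process on $\mathbb R_+^{\overline{\mathbb V}}$ with $O_j\equiv T_j$ for $j\in\partial\mathbb V$ and generator $L^Of(O)=\sum_{ij\in\overline E}\int_0^1dv\,[f(H^O_{ij;v}O)-f(O)]$, where $(H^O_{ij;v}O)_\ell=vO_i+(1-v)O_j$ for $\ell\in\{i,j\}\cap\mathbb V$ and $(H^O_{ij;v}O)_\ell=O_\ell$ otherwise. It has a unique invariant probability measure $\nu^O$. *)

theory Defs
  imports "HOL-Probability.Probability"
begin

definition internal_vertices :: "nat \<Rightarrow> nat set" where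
  "internal_vertices N = {1..N-1}"

definition opinion_edges :: "nat \<Rightarrow> (nat \<times> nat) set" where
  "opinion_edges N = {(k, k+1) | k. 1 \<le> k \<and> k \<le> N - 1} \<union> {(1, 0)}"

definition opinion_update :: "nat \<Rightarrow> nat \<Rightarrow> nat \<Rightarrow> real \<Rightarrow> (nat \<Rightarrow> real) \<Rightarrow> (nat \<Rightarrow> real)" where
  "opinion_update N i j v X =
     (\<lambda>l. if l \<in> {i, j} \<inter> internal_vertices N then v * X i + (1 - v) * X j else X l)"

definition opinion_generator :: "nat \<Rightarrow> ((nat \<Rightarrow> real) \<Rightarrow> real) \<Rightarrow> (nat \<Rightarrow> real) \<Rightarrow> real" where
  "opinion_generator N f X =
     (\<Sum>(i, j)\<in>opinion_edges N.
        (LINT v:{0..1}|lborel. f (opinion_update N i j v X) - f X))"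

definition opinion_space :: "nat \<Rightarrow> (nat \<Rightarrow> real) measure" where
  "opinion_space N = PiM {0..N} (\<lambda>_. borel)"

definition opinion_invariant :: "nat \<Rightarrow> real \<Rightarrow> real \<Rightarrow> (nat \<Rightarrow> real) measure \<Rightarrow> bool" where
  "opinion_invariant N Tm Tp \<nu> \<longleftrightarrow>
     prob_space \<nu> \<and> sets \<nu> = sets (opinion_space N) \<and>
     (AE X in \<nu>. X 0 = Tm \<and> X N = Tp \<and> (\<forall>k\<in>{0..N}. 0 \<le> X k)) \<and>
     (\<forall>f. f \<in> borel_measurable (opinion_space N) \<longrightarrow> (\<exists>B. \<forall>x. \<bar>f x\<bar> \<le> B) \<longrightarrow>
          (\<integral>X. opinion_generator N f X \<partial>\<nu>) = 0)"

end

theory Submission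
  imports Defs
begin


lemma space_os: "space (opinion_space N) = PiE {0..N} (\<lambda>_. UNIV)"
  by (simp add: opinion_space_def space_PiM)

lemma upd_meas:
  assumes "i \<le> N" "j \<le> N"
  shows "(\<lambda>p. opinion_update N i j (snd p) (fst p)) \<in> measurable (opinion_space N \<Otimes>\<^sub>M lborel) (opinion_space N)"
proof -
  have "(\<lambda>p l. opinion_update N i j (snd p) (fst p) l) \<in> measurable (opinion_space N \<Otimes>\<^sub>M lborel) (Pi\<^sub>M {0..N} (\<lambda>_. borel))"
  proof (rule measurable_PiM_single')
    fix l assume l: "l \<in> {0..N}"
    have mi: "(\<lambda>p. fst p i) \<in> borel_measurable (opinion_space N \<Otimes>\<^sub>M lborel)"
      unfolding opinion_space_def apply measurable using assms by auto
    have mj: "(\<lambda>p. fst p j) \<in> borel_measurable (opinion_space N \<Otimes>\<^sub>M lborel)"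
      unfolding opinion_space_def apply measurable using assms by auto
    have ml: "(\<lambda>p. fst p l) \<in> borel_measurable (opinion_space N \<Otimes>\<^sub>M lborel)"
      unfolding opinion_space_def apply measurable using l by auto
    show "(\<lambda>p. opinion_update N i j (snd p) (fst p) l) \<in> borel_measurable (opinion_space N \<Otimes>\<^sub>M lborel)"
      unfolding opinion_update_def using mi mj ml by measurable
  next
    show "(\<lambda>p l. opinion_update N i j (snd p) (fst p) l) \<in> space (opinion_space N \<Otimes>\<^sub>M lborel) \<rightarrow> (\<Pi>\<^sub>E l\<in>{0..N}. space borel)"
      by (auto simp: space_pair_measure space_os opinion_update_def internal_vertices_def PiE_def extensional_def)
  qed
  then show ?thesis unfolding opinion_space_def by simp
qed

lemma edges_eq: "opinion_edges N = insert (1,0) ((\<lambda>k. (k, k+1)) ` {1..N-1})"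
  unfolding opinion_edges_def by auto

lemma edges_finite: "finite (opinion_edges N)"
  unfolding edges_eq by simp

lemma edges_bound: "N \<ge> 2 \<Longrightarrow> (i,j) \<in> opinion_edges N \<Longrightarrow> i \<le> N \<and> j \<le> N \<and> i \<in> internal_vertices N \<and> i \<noteq> j"
  unfolding edges_eq internal_vertices_def by auto

lemma edges_sum:
  assumes "N \<ge> 2"
  shows "(\<Sum>(i,j)\<in>opinion_edges N. g i j) = g 1 0 + (\<Sum>k\<in>{1..N-1}. g k (k+1))"
proof -
  have "(1::nat,0::nat) \<notin> (\<lambda>k. (k, k+1)) ` {1..N-1}" by auto
  moreover have "inj_on (\<lambda>k::nat. (k, k+1)) {1..N-1}" by (auto simp: inj_on_def)
  ultimately show ?thesis unfolding edges_eq
    by (simp add: sum.reindex)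
qed

lemma edge_integrand_meas:
  assumes f: "f \<in> borel_measurable (opinion_space N)" and "i \<le> N" "j \<le> N"
  shows "(\<lambda>p. f (opinion_update N i j (snd p) (fst p))) \<in> borel_measurable (opinion_space N \<Otimes>\<^sub>M lborel)"
  using measurable_comp[OF upd_meas[OF assms(2,3)] f] by (simp add: comp_def)

lemma edge_term_meas:
  fixes f :: "(nat \<Rightarrow> real) \<Rightarrow> real"
  assumes f: "f \<in> borel_measurable (opinion_space N)" and "i \<le> N" "j \<le> N"
  shows "(\<lambda>X. LINT v:{0..1}|lborel. f (opinion_update N i j v X) - f X) \<in> borel_measurable (opinion_space N)"
proof -
  have m1: "(\<lambda>p. f (opinion_update N i j (snd p) (fst p))) \<in> borel_measurable (opinion_space N \<Otimes>\<^sub>M lborel)"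
    by (rule edge_integrand_meas[OF assms])
  have m2: "(\<lambda>p. f (fst p)) \<in> borel_measurable (opinion_space N \<Otimes>\<^sub>M lborel)"
    using f by measurable
  have m3: "(\<lambda>p::(nat\<Rightarrow>real)\<times>real. indicator {0..1::real} (snd p) :: real) \<in> borel_measurable (opinion_space N \<Otimes>\<^sub>M lborel)"
    by measurable
  have "case_prod (\<lambda>X v. indicator {0..1::real} v *\<^sub>R (f (opinion_update N i j v X) - f X)) \<in> borel_measurable (opinion_space N \<Otimes>\<^sub>M lborel)"
    using borel_measurable_times[OF m3 borel_measurable_diff[OF m1 m2]] by (simp add: case_prod_beta')
  from lborel.borel_measurable_lebesgue_integral[OF this]
  show ?thesis unfolding set_lebesgue_integral_def .
qed

lemma edge_term_bound:
  fixes f :: "(nat \<Rightarrow> real) \<Rightarrow> real"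
  assumes f: "f \<in> borel_measurable (opinion_space N)" and "i \<le> N" "j \<le> N"
    and B: "\<And>x. \<bar>f x\<bar> \<le> B" and X: "X \<in> space (opinion_space N)"
  shows "set_integrable lborel {0..1} (\<lambda>v. f (opinion_update N i j v X) - f X)"
    "\<bar>LINT v:{0..1}|lborel. f (opinion_update N i j v X) - f X\<bar> \<le> 2 * B"
proof -
  have m1: "(\<lambda>p. f (opinion_update N i j (snd p) (fst p))) \<in> borel_measurable (opinion_space N \<Otimes>\<^sub>M lborel)"
    by (rule edge_integrand_meas[OF assms(1-3)])
  have mv: "(\<lambda>v. f (opinion_update N i j v X)) \<in> borel_measurable lborel"
    using measurable_Pair2[OF m1 X] by simp
  have ci: "set_integrable lborel {0..1::real} (\<lambda>v. 2 * B)"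
    by (rule borel_integrable_atLeastAtMost') simp
  show si: "set_integrable lborel {0..1} (\<lambda>v. f (opinion_update N i j v X) - f X)"
  proof (rule set_integrable_bound[OF ci])
    show "set_borel_measurable lborel {0..1} (\<lambda>v. f (opinion_update N i j v X) - f X)"
      unfolding set_borel_measurable_def using mv by measurable
    show "AE v in lborel. v \<in> {0..1} \<longrightarrow> norm (f (opinion_update N i j v X) - f X) \<le> norm (2 * B)"
      using B by (auto intro!: AE_I2 simp: abs_le_iff) (smt (verit) B)+
  qed
  have "(LINT v:{0..1}|lborel. f (opinion_update N i j v X) - f X) \<le> (LINT v:{0..1::real}|lborel. 2 * B)"
    apply (rule set_integral_mono[OF si ci])
    subgoal for v using B[of "opinion_update N i j v X"] B[of X] by linarith
    done
  moreover have "(LINT v:{0..1::real}|lborel. - (2 * B)) \<le> (LINT v:{0..1}|lborel. f (opinion_update N i j v X) - f X)"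
    apply (rule set_integral_mono[OF _ si])
    apply (rule borel_integrable_atLeastAtMost') apply simp
    subgoal for v using B[of "opinion_update N i j v X"] B[of X] by linarith
    done
  moreover have "(LINT v:{0..1::real}|lborel. (2 * B)) = 2 * B" "(LINT v:{0..1::real}|lborel. - (2 * B)) = - 2 * B"
    by (simp_all add: set_integral_const)
  ultimately show "\<bar>LINT v:{0..1}|lborel. f (opinion_update N i j v X) - f X\<bar> \<le> 2 * B" by linarith
qed


lemma poly_int01:
  fixes p0 p1 p2 :: real
  shows "(LINT v:{0..1}|lborel. p0 + p1 * v + p2 * v^2) = p0 + p1/2 + p2/3"
proof -
  have "integral\<^sup>L lborel (\<lambda>x. indicator {0..1} x *\<^sub>R (p0 + p1 * x + p2 * x^2))
      = (\<lambda>v. p0 * v + p1 * v^2/2 + p2 * v^3/3) 1 - (\<lambda>v. p0 * v + p1 * v^2/2 + p2 * v^3/3) (0::real)"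
  proof (rule integral_FTC_atLeastAtMost)
    fix x :: real
    have "((\<lambda>v. p0 * v + p1 * v^2/2 + p2 * v^3/3) has_real_derivative (p0 + p1 * x + p2 * x^2)) (at x within {0..1})"
      by (auto intro!: derivative_eq_intros simp: power2_eq_square)
    then show "((\<lambda>v. p0 * v + p1 * v^2/2 + p2 * v^3/3) has_vector_derivative (p0 + p1 * x + p2 * x^2)) (at x within {0..1})"
      by (simp add: has_real_derivative_iff_has_vector_derivative)
  qed (auto intro!: continuous_intros)
  then show ?thesis by (simp add: set_lebesgue_integral_def)
qed

lemma poly_int01_integrable:
  fixes p0 p1 p2 :: real
  shows "set_integrable lborel {0..1} (\<lambda>v. p0 + p1 * v + p2 * v^2)"
  by (rule borel_integrable_atLeastAtMost') (auto intro!: continuous_intros)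

lemma edge_le:
  fixes f :: "(nat \<Rightarrow> real) \<Rightarrow> real"
  assumes f: "f \<in> borel_measurable (opinion_space N)" and "i \<le> N" "j \<le> N"
    and B: "\<And>x. \<bar>f x\<bar> \<le> B" and X: "X \<in> space (opinion_space N)"
    and le: "\<And>v. v \<in> {0..1} \<Longrightarrow> f (opinion_update N i j v X) - f X \<le> p0 + p1 * v + p2 * v^2"
  shows "(LINT v:{0..1}|lborel. f (opinion_update N i j v X) - f X) \<le> p0 + p1/2 + p2/3"
proof -
  have "(LINT v:{0..1}|lborel. f (opinion_update N i j v X) - f X) \<le> (LINT v:{0..1}|lborel. p0 + p1 * v + p2 * v^2)"
    by (rule set_integral_mono[OF edge_term_bound(1)[OF assms(1-5)] poly_int01_integrable le])
  then show ?thesis by (simp add: poly_int01)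
qed

lemma edge_eq:
  fixes f :: "(nat \<Rightarrow> real) \<Rightarrow> real"
  assumes f: "f \<in> borel_measurable (opinion_space N)" and "i \<le> N" "j \<le> N"
    and B: "\<And>x. \<bar>f x\<bar> \<le> B" and X: "X \<in> space (opinion_space N)"
    and eq: "\<And>v. v \<in> {0..1} \<Longrightarrow> f (opinion_update N i j v X) - f X = p0 + p1 * v + p2 * v^2"
  shows "(LINT v:{0..1}|lborel. f (opinion_update N i j v X) - f X) = p0 + p1/2 + p2/3"
proof -
  have "(LINT v:{0..1}|lborel. f (opinion_update N i j v X) - f X) = (LINT v:{0..1}|lborel. p0 + p1 * v + p2 * v^2)"
    by (rule set_lebesgue_integral_cong) (auto simp: eq)
  then show ?thesis by (simp add: poly_int01)
qed

locale opsetup =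
  fixes N :: nat and Tm Tp :: real and \<nu> :: "(nat \<Rightarrow> real) measure"
  assumes N2: "2 \<le> N" and inv: "opinion_invariant N Tm Tp \<nu>"
begin

lemma prob: "prob_space \<nu>" using inv unfolding opinion_invariant_def by auto

lemma sets_nu: "sets \<nu> = sets (opinion_space N)" using inv unfolding opinion_invariant_def by auto

lemma space_nu: "space \<nu> = space (opinion_space N)" using sets_eq_imp_space_eq[OF sets_nu] .

lemma AE_bd: "AE X in \<nu>. X 0 = Tm \<and> X N = Tp \<and> (\<forall>k\<in>{0..N}. 0 \<le> X k)"
  using inv unfolding opinion_invariant_def by auto

lemma meas_nu: assumes "f \<in> borel_measurable (opinion_space N)" shows "f \<in> borel_measurable \<nu>"
  using assms measurable_cong_sets[OF sets_nu refl, of borel] by blast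

lemma gen_meas:
  fixes f :: "(nat \<Rightarrow> real) \<Rightarrow> real"
  assumes f: "f \<in> borel_measurable (opinion_space N)"
  shows "(\<lambda>X. opinion_generator N f X) \<in> borel_measurable (opinion_space N)"
  unfolding opinion_generator_def
proof (rule borel_measurable_sum)
  fix e assume "e \<in> opinion_edges N"
  then obtain i j where e: "e = (i,j)" and "i \<le> N" "j \<le> N" using edges_bound[OF N2] by (cases e) auto
  then show "(\<lambda>X. case e of (i, j) \<Rightarrow> LBINT v:{0..1}. f (opinion_update N i j v X) - f X) \<in> borel_measurable (opinion_space N)"
    using edge_term_meas[OF f] by simp
qed

lemma gen_bound:
  fixes f :: "(nat \<Rightarrow> real) \<Rightarrow> real"
  assumes f: "f \<in> borel_measurable (opinion_space N)" and B: "\<And>x. \<bar>f x\<bar> \<le> B"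
    and X: "X \<in> space (opinion_space N)"
  shows "\<bar>opinion_generator N f X\<bar> \<le> real (card (opinion_edges N)) * (2 * B)"
  unfolding opinion_generator_def
proof -
  have "\<bar>\<Sum>(i, j)\<in>opinion_edges N. LBINT v:{0..1}. f (opinion_update N i j v X) - f X\<bar>
     \<le> (\<Sum>e\<in>opinion_edges N. \<bar>case e of (i,j) \<Rightarrow> LBINT v:{0..1}. f (opinion_update N i j v X) - f X\<bar>)"
    by (rule sum_abs)
  also have "\<dots> \<le> (\<Sum>e\<in>opinion_edges N. 2 * B)"
  proof (rule sum_mono)
    fix e assume "e \<in> opinion_edges N"
    then obtain i j where e: "e = (i,j)" and "i \<le> N" "j \<le> N" using edges_bound[OF N2] by (cases e) auto
    then show "\<bar>case e of (i,j) \<Rightarrow> LBINT v:{0..1}. f (opinion_update N i j v X) - f X\<bar> \<le> 2 * B"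
      using edge_term_bound(2)[OF f _ _ B X] by simp
  qed
  finally show "\<bar>\<Sum>(i, j)\<in>opinion_edges N. LBINT v:{0..1}. f (opinion_update N i j v X) - f X\<bar>
     \<le> real (card (opinion_edges N)) * (2 * B)" by simp
qed

lemma gen_zero:
  fixes f :: "(nat \<Rightarrow> real) \<Rightarrow> real"
  assumes f: "f \<in> borel_measurable (opinion_space N)" and B: "\<And>x. \<bar>f x\<bar> \<le> B"
  shows "integrable \<nu> (\<lambda>X. opinion_generator N f X)" "(\<integral>X. opinion_generator N f X \<partial>\<nu>) = 0"
proof -
  interpret prob_space \<nu> by (rule prob)
  show "integrable \<nu> (\<lambda>X. opinion_generator N f X)"
    apply (rule integrable_const_bound[where B="real (card (opinion_edges N)) * (2 * B)"])
    using gen_bound[OF f B] apply (auto simp: space_nu intro!: AE_I2)[1]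
    using meas_nu[OF gen_meas[OF f]] .
  show "(\<integral>X. opinion_generator N f X \<partial>\<nu>) = 0"
    using inv f B unfolding opinion_invariant_def by blast
qed

lemma gen_AE_zero:
  fixes f :: "(nat \<Rightarrow> real) \<Rightarrow> real"
  assumes f: "f \<in> borel_measurable (opinion_space N)" and B: "\<And>x. \<bar>f x\<bar> \<le> B"
    and le: "AE X in \<nu>. opinion_generator N f X \<le> 0"
  shows "AE X in \<nu>. opinion_generator N f X = 0"
proof -
  have i: "integrable \<nu> (\<lambda>X. - opinion_generator N f X)" using gen_zero(1)[OF f B] by simp
  have "(\<integral>X. - opinion_generator N f X \<partial>\<nu>) = 0" using gen_zero(2)[OF f B] by simp
  then have "AE X in \<nu>. - opinion_generator N f X = 0"
    using integral_nonneg_eq_0_iff_AE[OF i] le by auto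
  then show ?thesis by auto
qed

end


lemma upd_at: "opinion_update N i j v X k = (if k \<in> {i,j} \<inter> internal_vertices N then v * X i + (1-v) * X j else X k)"
  by (simp add: opinion_update_def)

lemma sum_upd:
  fixes g :: "real \<Rightarrow> real"
  assumes i: "i \<in> internal_vertices N" and ij: "i \<noteq> j"
  shows "(\<Sum>k\<in>internal_vertices N. g (opinion_update N i j v X k)) - (\<Sum>k\<in>internal_vertices N. g (X k))
    = (g (v * X i + (1-v) * X j) - g (X i)) + (if j \<in> internal_vertices N then g (v * X i + (1-v) * X j) - g (X j) else 0)"
proof -
  let ?w = "v * X i + (1-v) * X j"
  have "(\<Sum>k\<in>internal_vertices N. g (opinion_update N i j v X k)) - (\<Sum>k\<in>internal_vertices N. g (X k))
     = (\<Sum>k\<in>internal_vertices N. g (opinion_update N i j v X k) - g (X k))"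
    by (simp add: sum_subtractf)
  also have "\<dots> = (\<Sum>k\<in>internal_vertices N. (if k = i then g ?w - g (X i) else 0) + (if k = j then g ?w - g (X j) else 0))"
    by (rule sum.cong) (use ij in \<open>auto simp: upd_at\<close>)
  also have "\<dots> = (g ?w - g (X i)) + (if j \<in> internal_vertices N then g ?w - g (X j) else 0)"
    using i by (simp add: sum.distrib internal_vertices_def)
  finally show ?thesis .
qed

lemma comp_meas: "k \<le> N \<Longrightarrow> (\<lambda>X. X k) \<in> borel_measurable (opinion_space N)"
  unfolding opinion_space_def by (rule measurable_component_singleton) auto

definition alpha :: "real \<Rightarrow> (nat \<Rightarrow> real) \<Rightarrow> nat \<Rightarrow> real" where
  "alpha b X k = max (X k - b) 0"

definition Ppot :: "nat \<Rightarrow> real \<Rightarrow> (nat \<Rightarrow> real) \<Rightarrow> real" where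
  "Ppot N b X = (\<Sum>k\<in>internal_vertices N. (alpha b X k)^2)"

definition fK :: "nat \<Rightarrow> real \<Rightarrow> real \<Rightarrow> (nat \<Rightarrow> real) \<Rightarrow> real" where
  "fK N b K X = min (Ppot N b X) K"

lemma Ppot_nonneg: "0 \<le> Ppot N b X"
  unfolding Ppot_def by (auto intro!: sum_nonneg)

lemma fK_meas: "fK N b K \<in> borel_measurable (opinion_space N)"
proof -
  have "(\<lambda>X. Ppot N b X) \<in> borel_measurable (opinion_space N)"
    unfolding Ppot_def alpha_def
    by (intro borel_measurable_sum borel_measurable_power borel_measurable_max borel_measurable_diff borel_measurable_const comp_meas)
      (auto simp: internal_vertices_def)
  then show ?thesis unfolding fK_def by measurable
qed

lemma fK_bound: "0 \<le> K \<Longrightarrow> \<bar>fK N b K X\<bar> \<le> K"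
  unfolding fK_def using Ppot_nonneg[of N b X] by auto

lemma alpha_w:
  assumes v: "v \<in> {0..1}"
  shows "(alpha b (\<lambda>_. v * X i + (1-v) * X j) 0)^2 \<le> (v * alpha b X i + (1-v) * alpha b X j)^2"
proof -
  have a: "v * X i + (1-v) * X j - b = v * (X i - b) + (1-v) * (X j - b)" by algebra
  have "v * (X i - b) \<le> v * alpha b X i" using v by (intro mult_left_mono) (auto simp: alpha_def)
  moreover have "(1-v) * (X j - b) \<le> (1-v) * alpha b X j" using v by (intro mult_left_mono) (auto simp: alpha_def)
  moreover have "0 \<le> v * alpha b X i + (1-v) * alpha b X j" using v by (auto simp: alpha_def)
  ultimately have "alpha b (\<lambda>_. v * X i + (1-v) * X j) 0 \<le> v * alpha b X i + (1-v) * alpha b X j"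
    unfolding alpha_def using a by auto
  moreover have "0 \<le> alpha b (\<lambda>_. v * X i + (1-v) * X j) 0" by (simp add: alpha_def)
  ultimately show ?thesis by (intro power_mono) auto
qed

context opsetup
begin

lemma Ppot_edge:
  assumes e: "(i,j) \<in> opinion_edges N" and v: "v \<in> {0..1}"
    and bj: "j \<notin> internal_vertices N \<Longrightarrow> X j \<le> b"
  shows "Ppot N b (opinion_update N i j v X) - Ppot N b X \<le>
     (if j \<in> internal_vertices N then (alpha b X j ^2 - alpha b X i ^2) + (4 * alpha b X j * (alpha b X i - alpha b X j)) * v + (2 * (alpha b X i - alpha b X j)^2) * v^2
      else - (alpha b X i ^2) + 0 * v + (alpha b X i ^2) * v^2)"
proof -
  have eb: "i \<le> N \<and> j \<le> N \<and> i \<in> internal_vertices N \<and> i \<noteq> j" using edges_bound[OF N2 e] .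
  let ?w = "v * X i + (1-v) * X j"
  have "Ppot N b (opinion_update N i j v X) - Ppot N b X
     = ((alpha b (\<lambda>_. ?w) 0)^2 - (alpha b X i)^2) + (if j \<in> internal_vertices N then (alpha b (\<lambda>_. ?w) 0)^2 - (alpha b X j)^2 else 0)"
    unfolding Ppot_def alpha_def using sum_upd[of i N j "\<lambda>t. (max (t - b) 0)^2" v X] eb by simp
  also have "\<dots> \<le> ((v * alpha b X i + (1-v) * alpha b X j)^2 - (alpha b X i)^2) + (if j \<in> internal_vertices N then (v * alpha b X i + (1-v) * alpha b X j)^2 - (alpha b X j)^2 else 0)"
    using alpha_w[OF v, of b X i j] by auto
  also have "\<dots> = (if j \<in> internal_vertices N then (alpha b X j ^2 - alpha b X i ^2) + (4 * alpha b X j * (alpha b X i - alpha b X j)) * v + (2 * (alpha b X i - alpha b X j)^2) * v^2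
      else - (alpha b X i ^2) + 0 * v + (alpha b X i ^2) * v^2)"
  proof (cases "j \<in> internal_vertices N")
    case True then show ?thesis by (simp add: power2_eq_square algebra_simps)
  next
    case False
    then have "alpha b X j = 0" using bj by (simp add: alpha_def)
    then show ?thesis using False by (simp add: power2_eq_square algebra_simps)
  qed
  finally show ?thesis .
qed

lemma fK_edge:
  assumes e: "(i,j) \<in> opinion_edges N" and K: "0 \<le> K" and X: "X \<in> space (opinion_space N)"
    and bj: "j \<notin> internal_vertices N \<Longrightarrow> X j \<le> b"
  shows "(LINT v:{0..1}|lborel. fK N b K (opinion_update N i j v X) - fK N b K X)
     \<le> (if Ppot N b X < K then - ((alpha b X i - alpha b X j)^2) / 3 else 0)"
proof -
  have eb: "i \<le> N \<and> j \<le> N \<and> i \<in> internal_vertices N \<and> i \<noteq> j" using edges_bound[OF N2 e] .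
  show ?thesis
  proof (cases "Ppot N b X < K")
    case False
    have "(LINT v:{0..1}|lborel. fK N b K (opinion_update N i j v X) - fK N b K X) \<le> 0 + 0/2 + 0/3"
      apply (rule edge_le[OF fK_meas _ _ fK_bound[OF K] X])
      using eb False by (auto simp: fK_def)
    then show ?thesis using False by simp
  next
    case True
    show ?thesis
    proof (cases "j \<in> internal_vertices N")
      case jI: True
      have "(LINT v:{0..1}|lborel. fK N b K (opinion_update N i j v X) - fK N b K X)
         \<le> (alpha b X j ^2 - alpha b X i ^2) + (4 * alpha b X j * (alpha b X i - alpha b X j))/2 + (2 * (alpha b X i - alpha b X j)^2)/3"
      proof (rule edge_le[OF fK_meas _ _ fK_bound[OF K] X])
        fix v :: real assume v: "v \<in> {0..1}"
        have "fK N b K (opinion_update N i j v X) - fK N b K X \<le> Ppot N b (opinion_update N i j v X) - Ppot N b X"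
          using True by (auto simp: fK_def)
        then show "fK N b K (opinion_update N i j v X) - fK N b K X \<le> (alpha b X j ^2 - alpha b X i ^2) + (4 * alpha b X j * (alpha b X i - alpha b X j)) * v + (2 * (alpha b X i - alpha b X j)^2) * v^2"
          using Ppot_edge[where X=X and b=b, OF e v bj] jI by simp
      qed (use eb in auto)
      also have "\<dots> = - ((alpha b X i - alpha b X j)^2) / 3" by (simp add: power2_eq_square field_simps)
      finally show ?thesis using True by simp
    next
      case jI: False
      have aj: "alpha b X j = 0" using bj jI by (simp add: alpha_def)
      have "(LINT v:{0..1}|lborel. fK N b K (opinion_update N i j v X) - fK N b K X)
         \<le> - (alpha b X i ^2) + 0/2 + (alpha b X i ^2)/3"
      proof (rule edge_le[OF fK_meas _ _ fK_bound[OF K] X])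
        fix v :: real assume v: "v \<in> {0..1}"
        have "fK N b K (opinion_update N i j v X) - fK N b K X \<le> Ppot N b (opinion_update N i j v X) - Ppot N b X"
          using True by (auto simp: fK_def)
        then show "fK N b K (opinion_update N i j v X) - fK N b K X \<le> - (alpha b X i ^2) + 0 * v + (alpha b X i ^2) * v^2"
          using Ppot_edge[where X=X and b=b, OF e v bj] jI by simp
      qed (use eb in auto)
      also have "\<dots> \<le> - ((alpha b X i - alpha b X j)^2) / 3" using aj by (simp add: power2_eq_square)
      finally show ?thesis using True by simp
    qed
  qed
qed

end


context opsetup
begin

lemma edge_j: "(i,j) \<in> opinion_edges N \<Longrightarrow> j \<notin> internal_vertices N \<Longrightarrow> j = 0 \<or> j = N"
  using edges_bound[OF N2, of i j] unfolding internal_vertices_def by auto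

lemma AE_good: "AE X in \<nu>. X \<in> space (opinion_space N) \<and> X 0 = Tm \<and> X N = Tp \<and> (\<forall>k\<in>{0..N}. 0 \<le> X k)"
  using AE_bd by (auto simp: space_nu intro: AE_I2 elim!: AE_mp)

lemma support: "AE X in \<nu>. \<forall>k\<in>{0..N}. X k \<le> max Tm Tp"
proof -
  define b where "b = max Tm Tp"
  define Qs where "Qs X = (\<Sum>(i,j)\<in>opinion_edges N. (alpha b X i - alpha b X j)^2)" for X
  have stepK: "AE X in \<nu>. Ppot N b X < real K \<longrightarrow> Qs X \<le> 0" for K :: nat
  proof -
    have le: "AE X in \<nu>. opinion_generator N (fK N b (real K)) X \<le> (if Ppot N b X < real K then - Qs X / 3 else 0)"
      using AE_good
    proof (rule AE_mp, intro AE_I2 impI)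
      fix X assume X: "X \<in> space (opinion_space N) \<and> X 0 = Tm \<and> X N = Tp \<and> (\<forall>k\<in>{0..N}. 0 \<le> X k)"
      have "opinion_generator N (fK N b (real K)) X \<le> (\<Sum>(i,j)\<in>opinion_edges N. (if Ppot N b X < real K then - ((alpha b X i - alpha b X j)^2) / 3 else 0))"
        unfolding opinion_generator_def
      proof (rule sum_mono)
        fix e assume e: "e \<in> opinion_edges N"
        obtain i j where ij: "e = (i,j)" by (cases e)
        have bj: "X j \<le> b" if "j \<notin> internal_vertices N"
          using edge_j[of i j] e ij that X by (auto simp: b_def)
        show "(case e of (i, j) \<Rightarrow> LBINT v:{0..1}. fK N b (real K) (opinion_update N i j v X) - fK N b (real K) X)
          \<le> (case e of (i, j) \<Rightarrow> if Ppot N b X < real K then - ((alpha b X i - alpha b X j)^2) / 3 else 0)"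
          using fK_edge[of i j "real K" X b] e ij X bj by auto
      qed
      also have "\<dots> = (if Ppot N b X < real K then - Qs X / 3 else 0)"
        unfolding Qs_def by (auto simp: sum_negf sum_divide_distrib case_prod_beta')
      finally show "opinion_generator N (fK N b (real K)) X \<le> (if Ppot N b X < real K then - Qs X / 3 else 0)" .
    qed
    have Qnn: "0 \<le> Qs X" for X unfolding Qs_def by (auto intro!: sum_nonneg)
    have "AE X in \<nu>. opinion_generator N (fK N b (real K)) X \<le> 0"
      using le
    proof (rule AE_mp, intro AE_I2 impI)
      fix X assume "opinion_generator N (fK N b (real K)) X \<le> (if Ppot N b X < real K then - Qs X / 3 else 0)"
      then show "opinion_generator N (fK N b (real K)) X \<le> 0" using Qnn[of X] by (auto split: if_splits)
    qed
    then have "AE X in \<nu>. opinion_generator N (fK N b (real K)) X = 0"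
      using gen_AE_zero[OF fK_meas, of b "real K" "real K"] fK_bound[of "real K" N b] by simp
    then show ?thesis using le by (rule AE_mp[OF _ AE_mp]) (auto intro!: AE_I2)
  qed
  have "AE X in \<nu>. \<forall>K::nat. Ppot N b X < real K \<longrightarrow> Qs X \<le> 0"
    using stepK by (subst AE_all_countable) blast
  then show ?thesis using AE_good
  proof (rule AE_mp[OF _ AE_mp], intro AE_I2 impI)
    fix X assume X: "X \<in> space (opinion_space N) \<and> X 0 = Tm \<and> X N = Tp \<and> (\<forall>k\<in>{0..N}. 0 \<le> X k)"
      and H: "\<forall>K::nat. Ppot N b X < real K \<longrightarrow> Qs X \<le> 0"
    obtain K :: nat where "Ppot N b X < real K" using reals_Archimedean2 by blast
    with H have "Qs X \<le> 0" by blast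
    moreover have "0 \<le> Qs X" unfolding Qs_def by (auto intro!: sum_nonneg)
    ultimately have "Qs X = 0" by simp
    then have z: "\<forall>e\<in>opinion_edges N. (case e of (i,j) \<Rightarrow> (alpha b X i - alpha b X j)^2) = 0"
      unfolding Qs_def by (subst (asm) sum_nonneg_eq_0_iff) (auto simp: edges_finite)
    have e10: "alpha b X 1 = alpha b X 0" using z unfolding edges_eq by auto
    have ek: "alpha b X k = alpha b X (k+1)" if "1 \<le> k" "k \<le> N - 1" for k
      using z that unfolding edges_eq by auto
    have a0: "alpha b X 0 = 0" using X by (auto simp: alpha_def b_def)
    have "k \<le> N \<longrightarrow> alpha b X k = 0" for k
    proof (induction k)
      case 0 then show ?case using a0 by simp
    next
      case (Suc k)
      show ?case
      proof (cases "k = 0")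
        case True then show ?thesis using e10 a0 by simp
      next
        case False then show ?thesis using Suc ek[of k] by auto
      qed
    qed
    then have "k \<le> N \<Longrightarrow> max (X k - b) 0 = 0" for k by (simp add: alpha_def)
    then show "\<forall>k\<in>{0..N}. X k \<le> max Tm Tp"
      unfolding b_def by (metis atLeastAtMost_iff max.absorb_iff2 diff_le_0_iff_le)
  qed
qed

end


lemma quad_diff:
  fixes A :: "nat \<Rightarrow> nat \<Rightarrow> real" and y :: "nat \<Rightarrow> real"
  assumes J: "finite J" "i \<in> J" "j \<in> J" "i \<noteq> j" and sym: "\<And>a b. A a b = A b a"
  shows "(\<Sum>a\<in>J. \<Sum>b\<in>J. A a b * (y a + ((if a = i then s else 0) + (if a = j then t else 0))) * (y b + ((if b = i then s else 0) + (if b = j then t else 0))))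
       - (\<Sum>a\<in>J. \<Sum>b\<in>J. A a b * y a * y b)
       = 2 * s * (\<Sum>a\<in>J. A a i * y a) + 2 * t * (\<Sum>a\<in>J. A a j * y a) + s^2 * A i i + 2 * s * t * A i j + t^2 * A j j"
proof -
  define d where "d k = (if k = i then s else 0) + (if k = j then t else 0)" for k
  have e1: "(\<Sum>a\<in>J. \<Sum>b\<in>J. A a b * (y a + d a) * (y b + d b))
      = (\<Sum>a\<in>J. \<Sum>b\<in>J. A a b * y a * y b) + (\<Sum>a\<in>J. y a * (\<Sum>b\<in>J. A a b * d b))
        + (\<Sum>b\<in>J. y b * (\<Sum>a\<in>J. A a b * d a)) + (\<Sum>a\<in>J. d a * (\<Sum>b\<in>J. A a b * d b))"
  proof -
    have "(\<Sum>a\<in>J. \<Sum>b\<in>J. A a b * (y a + d a) * (y b + d b))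
      = (\<Sum>a\<in>J. \<Sum>b\<in>J. A a b * y a * y b + y a * (A a b * d b) + y b * (A a b * d a) + d a * (A a b * d b))"
      by (intro sum.cong refl) (simp add: algebra_simps)
    also have "\<dots> = (\<Sum>a\<in>J. \<Sum>b\<in>J. A a b * y a * y b) + (\<Sum>a\<in>J. \<Sum>b\<in>J. y a * (A a b * d b))
        + (\<Sum>a\<in>J. \<Sum>b\<in>J. y b * (A a b * d a)) + (\<Sum>a\<in>J. \<Sum>b\<in>J. d a * (A a b * d b))"
      by (simp only: sum.distrib)
    also have "(\<Sum>a\<in>J. \<Sum>b\<in>J. y b * (A a b * d a)) = (\<Sum>b\<in>J. y b * (\<Sum>a\<in>J. A a b * d a))"
      by (subst sum.swap) (simp only: sum_distrib_left)
    also have "(\<Sum>a\<in>J. \<Sum>b\<in>J. y a * (A a b * d b)) = (\<Sum>a\<in>J. y a * (\<Sum>b\<in>J. A a b * d b))"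
      by (simp only: sum_distrib_left)
    also have "(\<Sum>a\<in>J. \<Sum>b\<in>J. d a * (A a b * d b)) = (\<Sum>a\<in>J. d a * (\<Sum>b\<in>J. A a b * d b))"
      by (simp only: sum_distrib_left)
    finally show ?thesis .
  qed
  have outer: "(\<Sum>a\<in>J. d a * g a) = s * g i + t * g j" for g :: "nat \<Rightarrow> real"
  proof -
    have "(\<Sum>a\<in>J. d a * g a) = (\<Sum>a\<in>J. (if a = i then s * g i else 0) + (if a = j then t * g j else 0))"
      by (rule sum.cong) (auto simp: d_def J)
    also have "\<dots> = s * g i + t * g j" using J by (simp add: sum.distrib)
    finally show ?thesis .
  qed
  have inner: "(\<Sum>b\<in>J. A a b * d b) = A a i * s + A a j * t" for a
    using outer[of "\<lambda>b. A a b"] by (simp add: mult.commute)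
  have inner2: "(\<Sum>a\<in>J. A a b * d a) = A i b * s + A j b * t" for b
    using outer[of "\<lambda>a. A a b"] by (simp add: mult.commute)
  have "(\<Sum>a\<in>J. \<Sum>b\<in>J. A a b * (y a + d a) * (y b + d b)) - (\<Sum>a\<in>J. \<Sum>b\<in>J. A a b * y a * y b)
     = (\<Sum>a\<in>J. y a * (A a i * s + A a j * t)) + (\<Sum>b\<in>J. y b * (A i b * s + A j b * t))
       + (s * (A i i * s + A i j * t) + t * (A j i * s + A j j * t))"
    unfolding e1 inner inner2 outer by simp
  also have "\<dots> = 2 * s * (\<Sum>a\<in>J. A a i * y a) + 2 * t * (\<Sum>a\<in>J. A a j * y a) + s^2 * A i i + 2 * s * t * A i j + t^2 * A j j"
    using sym[of i j] sym
    by (simp add: algebra_simps sum.distrib sum_distrib_left power2_eq_square)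
  finally show ?thesis unfolding d_def .
qed


definition Gf :: "nat \<Rightarrow> nat \<Rightarrow> nat \<Rightarrow> real" where
  "Gf N a b = real (min a b) * real (N - max a b) / real N"

lemma Gf_sym: "Gf N a b = Gf N b a"
  unfolding Gf_def by (simp add: min.commute max.commute)

lemma Gf_nonneg: "0 \<le> Gf N a b"
  unfolding Gf_def by simp

lemma Gf_diag: "a \<le> N \<Longrightarrow> Gf N a a \<le> real N / 4"
proof -
  assume a: "a \<le> N"
  show ?thesis
  proof (cases "N = 0")
    case True then show ?thesis by (simp add: Gf_def)
  next
    case False
    have "real a * real (N - a) * 4 \<le> real N * real N"
    proof -
      have "0 \<le> (real N - 2 * real a)^2" by simp
      then show ?thesis using a by (simp add: of_nat_diff power2_eq_square algebra_simps)
    qed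
    then show ?thesis using False unfolding Gf_def by (simp add: field_simps)
  qed
qed

lemma Gf_step:
  assumes "0 < N" "k < N" "l \<le> N"
  shows "Gf N l (k+1) - Gf N l k = (if k < l then (real N - real l) / real N else - real l / real N)"
proof (cases "k < l")
  case True
  then have "min l (k+1) = k+1" "min l k = k" "max l (k+1) = l" "max l k = l" by auto
  then show ?thesis using True assms unfolding Gf_def by (simp add: of_nat_diff field_simps)
next
  case False
  then have "min l (k+1) = l" "min l k = l" "max l (k+1) = k+1" "max l k = k" by auto
  then show ?thesis using False assms unfolding Gf_def by (simp add: of_nat_diff field_simps)
qed

lemma green_tel:
  fixes x :: "nat \<Rightarrow> real"
  assumes N: "0 < N" and l: "l \<le> N"
  shows "(\<Sum>k<N. (x (k+1) - x k) * (Gf N l (k+1) - Gf N l k))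
       = x l - ((real N - real l) * x 0 + real l * x N) / real N"
proof -
  have "(\<Sum>k<N. (x (k+1) - x k) * (Gf N l (k+1) - Gf N l k))
      = (\<Sum>k\<in>{0..<l}. (x (Suc k) - x k) * ((real N - real l) / real N)) + (\<Sum>k\<in>{l..<N}. (x (Suc k) - x k) * (- real l / real N))"
  proof -
    have "(\<Sum>k<N. (x (k+1) - x k) * (Gf N l (k+1) - Gf N l k))
       = (\<Sum>k\<in>{0..<N}. (x (Suc k) - x k) * (if k < l then (real N - real l) / real N else - real l / real N))"
      unfolding atLeast0LessThan
      by (rule sum.cong[OF refl]) (use Gf_step[OF N _ l] in simp)
    also have "\<dots> = (\<Sum>k\<in>{0..<l}. (x (Suc k) - x k) * (if k < l then (real N - real l) / real N else - real l / real N))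
       + (\<Sum>k\<in>{l..<N}. (x (Suc k) - x k) * (if k < l then (real N - real l) / real N else - real l / real N))"
      by (rule sum.atLeastLessThan_concat[symmetric]) (use l in auto)
    also have "(\<Sum>k\<in>{0..<l}. (x (Suc k) - x k) * (if k < l then (real N - real l) / real N else - real l / real N))
        = (\<Sum>k\<in>{0..<l}. (x (Suc k) - x k) * ((real N - real l) / real N))"
      by (rule sum.cong) auto
    also have "(\<Sum>k\<in>{l..<N}. (x (Suc k) - x k) * (if k < l then (real N - real l) / real N else - real l / real N))
        = (\<Sum>k\<in>{l..<N}. (x (Suc k) - x k) * (- real l / real N))"
      by (rule sum.cong) auto
    finally show ?thesis .
  qed
  also have "\<dots> = (x l - x 0) * ((real N - real l) / real N) + (x N - x l) * (- real l / real N)"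
  proof -
    have "(\<Sum>k\<in>{0..<l}. (x (Suc k) - x k) * ((real N - real l) / real N)) = (x l - x 0) * ((real N - real l) / real N)"
      by (simp only: sum_distrib_right[symmetric] sum_Suc_diff'[OF le0])
    moreover have "(\<Sum>k\<in>{l..<N}. (x (Suc k) - x k) * (- real l / real N)) = (x N - x l) * (- real l / real N)"
      by (simp only: sum_distrib_right[symmetric] sum_Suc_diff'[OF l])
    ultimately show ?thesis by (simp only:)
  qed
  also have "\<dots> = x l - ((real N - real l) * x 0 + real l * x N) / real N"
    using N by (simp add: field_simps)
  finally show ?thesis .
qed


definition mlin :: "nat \<Rightarrow> real \<Rightarrow> real \<Rightarrow> nat \<Rightarrow> real" where
  "mlin N T0 TN k = T0 + real k / real N * (TN - T0)"

definition Am :: "nat \<Rightarrow> nat \<Rightarrow> nat \<Rightarrow> real" where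
  "Am N a b = Gf N a b + (if a = b \<and> a \<in> internal_vertices N then real N / 2 else 0)"

definition qf :: "nat \<Rightarrow> real \<Rightarrow> real \<Rightarrow> (nat \<Rightarrow> real) \<Rightarrow> real" where
  "qf N T0 TN Z = (\<Sum>a\<in>{0..N}. \<Sum>b\<in>{0..N}. Am N a b * (Z a - mlin N T0 TN a) * (Z b - mlin N T0 TN b))"

definition clampb :: "real \<Rightarrow> (nat \<Rightarrow> real) \<Rightarrow> (nat \<Rightarrow> real)" where
  "clampb b Z = (\<lambda>k. max 0 (min b (Z k)))"

definition fq :: "nat \<Rightarrow> real \<Rightarrow> real \<Rightarrow> real \<Rightarrow> (nat \<Rightarrow> real) \<Rightarrow> real" where
  "fq N T0 TN b X = qf N T0 TN (clampb b X)"

definition Sv :: "nat \<Rightarrow> real \<Rightarrow> real \<Rightarrow> (nat \<Rightarrow> real) \<Rightarrow> nat \<Rightarrow> real" where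
  "Sv N T0 TN X p = (\<Sum>a\<in>{0..N}. Am N a p * (X a - mlin N T0 TN a))"

lemma Am_sym: "Am N a b = Am N b a"
  unfolding Am_def using Gf_sym by auto

lemma Am_zero: "a \<le> N \<Longrightarrow> b \<le> N \<Longrightarrow> a \<notin> internal_vertices N \<or> b \<notin> internal_vertices N \<Longrightarrow> Am N a b = 0"
  unfolding Am_def Gf_def internal_vertices_def by (cases "a = 0 \<or> b = 0") auto

lemma qf_local:
  assumes "\<And>k. k \<in> internal_vertices N \<Longrightarrow> Z k = Z' k"
  shows "qf N T0 TN Z = qf N T0 TN Z'"
  unfolding qf_def
proof (intro sum.cong refl)
  fix a b assume a: "a \<in> {0..N}" and b: "b \<in> {0..N}"
  show "Am N a b * (Z a - mlin N T0 TN a) * (Z b - mlin N T0 TN b) = Am N a b * (Z' a - mlin N T0 TN a) * (Z' b - mlin N T0 TN b)"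
  proof (cases "a \<in> internal_vertices N \<and> b \<in> internal_vertices N")
    case True then show ?thesis using assms by simp
  next
    case False then show ?thesis using Am_zero[of a N b] a b by auto
  qed
qed

lemma qf_J:
  assumes "\<And>k. k \<le> N \<Longrightarrow> Z k = Z' k"
  shows "qf N T0 TN Z = qf N T0 TN Z'"
  by (rule qf_local) (use assms in \<open>auto simp: internal_vertices_def\<close>)

lemma fq_meas: "fq N T0 TN b \<in> borel_measurable (opinion_space N)"
  unfolding fq_def qf_def clampb_def
  by (intro borel_measurable_sum borel_measurable_times borel_measurable_diff borel_measurable_max borel_measurable_min
      borel_measurable_const comp_meas) auto

lemma mlin_bd:
  assumes "k \<le> N" "0 < N" "0 \<le> T0" "T0 \<le> b" "0 \<le> TN" "TN \<le> b"
  shows "0 \<le> mlin N T0 TN k \<and> mlin N T0 TN k \<le> b"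
proof -
  have t: "0 \<le> real k / real N" "real k / real N \<le> 1" using assms by auto
  have "mlin N T0 TN k = (1 - real k / real N) * T0 + (real k / real N) * TN"
    unfolding mlin_def by (simp add: algebra_simps add_divide_distrib[symmetric] diff_divide_distrib[symmetric])
  moreover have "0 \<le> (1 - real k / real N) * T0 + (real k / real N) * TN"
    using t assms by simp
  moreover have "(1 - real k / real N) * T0 + (real k / real N) * TN \<le> (1 - real k / real N) * b + (real k / real N) * b"
    using t assms by (intro add_mono mult_left_mono) auto
  ultimately show ?thesis by (simp add: algebra_simps)
qed

lemma fq_bound:
  assumes "0 < N" "0 \<le> T0" "T0 \<le> b" "0 \<le> TN" "TN \<le> b"
  shows "\<bar>fq N T0 TN b X\<bar> \<le> (\<Sum>a\<in>{0..N}. \<Sum>c\<in>{0..N}. \<bar>Am N a c\<bar> * b * b)"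
  unfolding fq_def qf_def
proof -
  have "\<bar>\<Sum>a\<in>{0..N}. \<Sum>c\<in>{0..N}. Am N a c * (clampb b X a - mlin N T0 TN a) * (clampb b X c - mlin N T0 TN c)\<bar>
     \<le> (\<Sum>a\<in>{0..N}. \<bar>\<Sum>c\<in>{0..N}. Am N a c * (clampb b X a - mlin N T0 TN a) * (clampb b X c - mlin N T0 TN c)\<bar>)"
    by (rule sum_abs)
  also have "\<dots> \<le> (\<Sum>a\<in>{0..N}. \<Sum>c\<in>{0..N}. \<bar>Am N a c * (clampb b X a - mlin N T0 TN a) * (clampb b X c - mlin N T0 TN c)\<bar>)"
    by (intro sum_mono sum_abs)
  also have "\<dots> \<le> (\<Sum>a\<in>{0..N}. \<Sum>c\<in>{0..N}. \<bar>Am N a c\<bar> * b * b)"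
  proof (intro sum_mono)
    fix a c assume a: "a \<in> {0..N}" and c: "c \<in> {0..N}"
    have b0: "0 \<le> b" using assms by simp
    have "\<bar>clampb b X a - mlin N T0 TN a\<bar> \<le> b" "\<bar>clampb b X c - mlin N T0 TN c\<bar> \<le> b"
      using mlin_bd[of a N T0 b TN] mlin_bd[of c N T0 b TN] a c assms b0
      by (auto simp: clampb_def abs_le_iff)
    then show "\<bar>Am N a c * (clampb b X a - mlin N T0 TN a) * (clampb b X c - mlin N T0 TN c)\<bar> \<le> \<bar>Am N a c\<bar> * b * b"
      unfolding abs_mult by (intro mult_mono) auto
  qed
  finally show "\<bar>\<Sum>a\<in>{0..N}. \<Sum>c\<in>{0..N}. Am N a c * (clampb b X a - mlin N T0 TN a) * (clampb b X c - mlin N T0 TN c)\<bar>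
     \<le> (\<Sum>a\<in>{0..N}. \<Sum>c\<in>{0..N}. \<bar>Am N a c\<bar> * b * b)" .
qed


context opsetup
begin

definition good :: "real \<Rightarrow> (nat \<Rightarrow> real) \<Rightarrow> bool" where
  "good b X \<longleftrightarrow> X \<in> space (opinion_space N) \<and> X 0 = Tm \<and> X N = Tp \<and> (\<forall>k\<in>{0..N}. 0 \<le> X k \<and> X k \<le> b)"

lemma fq_edge:
  assumes e: "(i,j) \<in> opinion_edges N" and g: "good b X" and pos: "0 < Tm" "0 < Tp" and bdef: "b = max Tm Tp"
  shows "(LINT v:{0..1}|lborel. fq N Tm Tp b (opinion_update N i j v X) - fq N Tm Tp b X)
    = (X j - X i) * (Sv N Tm Tp X i - Sv N Tm Tp X j) + (X j - X i)^2 * (Am N i i - Am N i j + Am N j j) / 3"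
proof -
  have eb: "i \<le> N \<and> j \<le> N \<and> i \<in> internal_vertices N \<and> i \<noteq> j" using edges_bound[OF N2 e] .
  have N0: "0 < N" using N2 by simp
  have Xs: "X \<in> space (opinion_space N)" and Xb: "\<And>k. k \<le> N \<Longrightarrow> 0 \<le> X k \<and> X k \<le> b"
    using g unfolding good_def by auto
  define h where "h = X j - X i"
  define Si where "Si = Sv N Tm Tp X i"
  define Sj where "Sj = Sv N Tm Tp X j"
  define y where "y a = X a - mlin N Tm Tp a" for a
  let ?A = "Am N"
  have Bd: "\<And>x. \<bar>fq N Tm Tp b x\<bar> \<le> (\<Sum>a\<in>{0..N}. \<Sum>c\<in>{0..N}. \<bar>Am N a c\<bar> * b * b)"
    by (rule fq_bound) (use N0 pos bdef in auto)
  have key: "fq N Tm Tp b (opinion_update N i j v X) - fq N Tm Tp b X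
     = (2 * h * Si + h^2 * ?A i i) + (- 2 * h * Si - 2 * h * Sj - 2 * h^2 * ?A i i - 2 * h^2 * ?A i j) * v
       + (h^2 * ?A i i + 2 * h^2 * ?A i j + h^2 * ?A j j) * v^2" if v: "v \<in> {0..1}" for v
  proof -
    define s where "s = (1 - v) * h"
    define t where "t = - v * h"
    define d where "d k = (if k = i then s else 0) + (if k = j then t else 0)" for k
    have wb: "0 \<le> v * X i + (1-v) * X j \<and> v * X i + (1-v) * X j \<le> b"
    proof -
      have "0 \<le> v * X i" "0 \<le> (1-v) * X j" using v Xb eb by auto
      moreover have "v * X i \<le> v * b" "(1-v) * X j \<le> (1-v) * b" using v Xb eb by (auto intro: mult_left_mono)
      ultimately show ?thesis by (simp add: algebra_simps)
    qed
    have c1: "fq N Tm Tp b (opinion_update N i j v X) = qf N Tm Tp (opinion_update N i j v X)"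
      unfolding fq_def by (rule qf_J) (use wb Xb in \<open>auto simp: clampb_def upd_at\<close>)
    have c2: "fq N Tm Tp b X = qf N Tm Tp X"
      unfolding fq_def by (rule qf_J) (use Xb in \<open>auto simp: clampb_def\<close>)
    have c3: "qf N Tm Tp (opinion_update N i j v X) = qf N Tm Tp (\<lambda>k. X k + d k)"
    proof (rule qf_local)
      fix k assume k: "k \<in> internal_vertices N"
      show "opinion_update N i j v X k = X k + d k"
        using k eb unfolding upd_at d_def s_def t_def h_def by (auto simp: algebra_simps)
    qed
    have c4: "qf N Tm Tp (\<lambda>k. X k + d k) = (\<Sum>a\<in>{0..N}. \<Sum>c\<in>{0..N}. ?A a c * (y a + d a) * (y c + d c))"
      unfolding qf_def y_def by (intro sum.cong refl) (simp add: algebra_simps)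
    have c5: "qf N Tm Tp X = (\<Sum>a\<in>{0..N}. \<Sum>c\<in>{0..N}. ?A a c * y a * y c)"
      unfolding qf_def y_def by simp
    have qd: "(\<Sum>a\<in>{0..N}. \<Sum>c\<in>{0..N}. ?A a c * (y a + d a) * (y c + d c)) - (\<Sum>a\<in>{0..N}. \<Sum>c\<in>{0..N}. ?A a c * y a * y c)
       = 2 * s * (\<Sum>a\<in>{0..N}. ?A a i * y a) + 2 * t * (\<Sum>a\<in>{0..N}. ?A a j * y a) + s^2 * ?A i i + 2 * s * t * ?A i j + t^2 * ?A j j"
      unfolding d_def by (rule quad_diff) (use eb Am_sym in auto)
    have "fq N Tm Tp b (opinion_update N i j v X) - fq N Tm Tp b X
       = 2 * s * Si + 2 * t * Sj + s^2 * ?A i i + 2 * s * t * ?A i j + t^2 * ?A j j"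
      using qd unfolding c1 c2 c3 c4 c5 Si_def Sj_def Sv_def y_def .
    then show ?thesis unfolding s_def t_def by (simp add: power2_eq_square algebra_simps)
  qed
  have "(LINT v:{0..1}|lborel. fq N Tm Tp b (opinion_update N i j v X) - fq N Tm Tp b X)
     = (2 * h * Si + h^2 * ?A i i) + (- 2 * h * Si - 2 * h * Sj - 2 * h^2 * ?A i i - 2 * h^2 * ?A i j) / 2
       + (h^2 * ?A i i + 2 * h^2 * ?A i j + h^2 * ?A j j) / 3"
    by (rule edge_eq[OF fq_meas _ _ Bd Xs key]) (use eb in auto)
  also have "\<dots> = h * (Si - Sj) + h^2 * (?A i i - ?A i j + ?A j j) / 3"
    by (simp add: field_simps power2_eq_square)
  finally show ?thesis unfolding h_def Si_def Sj_def .
qed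

end


context opsetup
begin

definition Tk :: "(nat \<Rightarrow> real) \<Rightarrow> nat \<Rightarrow> real" where
  "Tk X k = - (X (k+1) - X k) * (Sv N Tm Tp X (k+1) - Sv N Tm Tp X k)
     + (X (k+1) - X k)^2 * (Am N k k - Am N k (k+1) + Am N (k+1) (k+1)) / 3"

lemma gen_fq:
  assumes g: "good b X" and pos: "0 < Tm" "0 < Tp" and bdef: "b = max Tm Tp"
  shows "opinion_generator N (fq N Tm Tp b) X = (\<Sum>k<N. Tk X k)"
proof -
  have "opinion_generator N (fq N Tm Tp b) X
     = (LINT v:{0..1}|lborel. fq N Tm Tp b (opinion_update N 1 0 v X) - fq N Tm Tp b X)
       + (\<Sum>k\<in>{1..N-1}. LINT v:{0..1}|lborel. fq N Tm Tp b (opinion_update N k (k+1) v X) - fq N Tm Tp b X)"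
    unfolding opinion_generator_def by (rule edges_sum[OF N2])
  also have "(LINT v:{0..1}|lborel. fq N Tm Tp b (opinion_update N 1 0 v X) - fq N Tm Tp b X) = Tk X 0"
    using fq_edge[of 1 0, OF _ g pos bdef] N2 Am_sym[of N 1 0]
    unfolding Tk_def by (simp add: edges_eq algebra_simps power2_commute)
  also have "(\<Sum>k\<in>{1..N-1}. LINT v:{0..1}|lborel. fq N Tm Tp b (opinion_update N k (k+1) v X) - fq N Tm Tp b X)
      = (\<Sum>k\<in>{1..N-1}. Tk X k)"
  proof (rule sum.cong[OF refl])
    fix k assume k: "k \<in> {1..N-1}"
    then have "(k, k+1) \<in> opinion_edges N" unfolding edges_eq by auto
    from fq_edge[OF this g pos bdef]
    show "(LINT v:{0..1}|lborel. fq N Tm Tp b (opinion_update N k (k+1) v X) - fq N Tm Tp b X) = Tk X k"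
      unfolding Tk_def by (simp add: algebra_simps)
  qed
  also have "Tk X 0 + (\<Sum>k\<in>{1..N-1}. Tk X k) = (\<Sum>k<N. Tk X k)"
  proof -
    have "{..<N} = insert 0 {1..N-1}" using N2 by auto
    then show ?thesis by simp
  qed
  finally show ?thesis .
qed

end


context opsetup
begin

lemma mlin0: "mlin N Tm Tp 0 = Tm" by (simp add: mlin_def)
lemma mlinN: "mlin N Tm Tp N = Tp" using N2 by (simp add: mlin_def)

lemma Sv_split:
  assumes g: "good b X" and p: "p \<le> N"
  shows "Sv N Tm Tp X p = (\<Sum>l\<in>{0..N}. Gf N l p * (X l - mlin N Tm Tp l)) + real N / 2 * (X p - mlin N Tm Tp p)"
proof -
  have y0: "X 0 - mlin N Tm Tp 0 = 0" "X N - mlin N Tm Tp N = 0"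
    using g mlin0 mlinN unfolding good_def by auto
  have "Sv N Tm Tp X p = (\<Sum>l\<in>{0..N}. Gf N l p * (X l - mlin N Tm Tp l))
      + (\<Sum>l\<in>{0..N}. (if l = p then (if p \<in> internal_vertices N then real N / 2 else 0) * (X p - mlin N Tm Tp p) else 0))"
    unfolding Sv_def sum.distrib[symmetric]
    by (rule sum.cong[OF refl]) (auto simp: Am_def algebra_simps)
  also have "(\<Sum>l\<in>{0..N}. (if l = p then (if p \<in> internal_vertices N then real N / 2 else 0) * (X p - mlin N Tm Tp p) else 0))
      = real N / 2 * (X p - mlin N Tm Tp p)"
  proof (cases "p \<in> internal_vertices N")
    case False
    then have "p = 0 \<or> p = N" using p by (auto simp: internal_vertices_def)
    then show ?thesis using y0 False p by auto
  qed (use p in auto)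
  finally show ?thesis .
qed

end


context opsetup
begin

lemma Am_c: "k < N \<Longrightarrow> Am N k k - Am N k (k+1) + Am N (k+1) (k+1) \<le> 3 * real N / 2"
proof -
  assume k: "k < N"
  have "Am N k k \<le> real N / 4 + real N / 2" using Gf_diag[of k N] k unfolding Am_def by auto
  moreover have "Am N (k+1) (k+1) \<le> real N / 4 + real N / 2" using Gf_diag[of "k+1" N] k unfolding Am_def by auto
  moreover have "0 \<le> Am N k (k+1)" unfolding Am_def using Gf_nonneg by auto
  ultimately show ?thesis by linarith
qed

lemma Tk_sum_bound:
  assumes g: "good b X"
  shows "(\<Sum>k<N. Tk X k) \<le> - (\<Sum>l\<in>{0..N}. (X l - mlin N Tm Tp l)^2) + (Tp - Tm)^2 / 2"
proof -
  have N0: "0 < N" using N2 by simp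
  define y where "y l = X l - mlin N Tm Tp l" for l
  define h where "h k = X (k+1) - X k" for k
  define S where "S = Sv N Tm Tp X"
  have X0: "X 0 = Tm" and XN: "X N = Tp" using g unfolding good_def by auto
  have Sd: "S (k+1) - S k = (\<Sum>l\<in>{0..N}. (Gf N l (k+1) - Gf N l k) * y l) + real N / 2 * (y (k+1) - y k)"
    if k: "k < N" for k
  proof -
    have "(\<Sum>l\<in>{0..N}. (Gf N l (k+1) - Gf N l k) * y l) = (\<Sum>l\<in>{0..N}. Gf N l (k+1) * y l) - (\<Sum>l\<in>{0..N}. Gf N l k * y l)"
      by (simp add: sum_subtractf[symmetric] left_diff_distrib)
    moreover have "S (k+1) = (\<Sum>l\<in>{0..N}. Gf N l (k+1) * y l) + real N / 2 * y (k+1)"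
      using Sv_split[OF g, of "k+1"] k unfolding S_def y_def by simp
    moreover have "S k = (\<Sum>l\<in>{0..N}. Gf N l k * y l) + real N / 2 * y k"
      using Sv_split[OF g, of k] k unfolding S_def y_def by simp
    ultimately show ?thesis by (simp add: algebra_simps; simp add: field_simps)
  qed
  have A: "(\<Sum>k<N. h k * (S (k+1) - S k))
     = (\<Sum>l\<in>{0..N}. y l * (\<Sum>k<N. h k * (Gf N l (k+1) - Gf N l k))) + real N / 2 * (\<Sum>k<N. h k * (y (k+1) - y k))"
  proof -
    have "(\<Sum>k<N. h k * (S (k+1) - S k)) = (\<Sum>k<N. (\<Sum>l\<in>{0..N}. y l * (h k * (Gf N l (k+1) - Gf N l k))) + real N / 2 * (h k * (y (k+1) - y k)))"
    proof (rule sum.cong[OF refl])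
      fix k assume "k \<in> {..<N}"
      then have "h k * (S (k+1) - S k) = h k * ((\<Sum>l\<in>{0..N}. (Gf N l (k+1) - Gf N l k) * y l) + real N / 2 * (y (k+1) - y k))"
        using Sd by simp
      also have "\<dots> = (\<Sum>l\<in>{0..N}. y l * (h k * (Gf N l (k+1) - Gf N l k))) + real N / 2 * (h k * (y (k+1) - y k))"
        by (simp add: distrib_left sum_distrib_left mult_ac)
      finally show "h k * (S (k+1) - S k) = (\<Sum>l\<in>{0..N}. y l * (h k * (Gf N l (k+1) - Gf N l k))) + real N / 2 * (h k * (y (k+1) - y k))" .
    qed
    also have "\<dots> = (\<Sum>k<N. \<Sum>l\<in>{0..N}. y l * (h k * (Gf N l (k+1) - Gf N l k))) + real N / 2 * (\<Sum>k<N. h k * (y (k+1) - y k))"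
      by (simp add: sum.distrib sum_distrib_left)
    also have "(\<Sum>k<N. \<Sum>l\<in>{0..N}. y l * (h k * (Gf N l (k+1) - Gf N l k))) = (\<Sum>l\<in>{0..N}. y l * (\<Sum>k<N. h k * (Gf N l (k+1) - Gf N l k)))"
      by (subst sum.swap) (simp add: sum_distrib_left)
    finally show ?thesis .
  qed
  have G: "(\<Sum>k<N. h k * (Gf N l (k+1) - Gf N l k)) = y l" if l: "l \<in> {0..N}" for l
  proof -
    have "(\<Sum>k<N. h k * (Gf N l (k+1) - Gf N l k)) = X l - ((real N - real l) * X 0 + real l * X N) / real N"
      unfolding h_def by (rule green_tel) (use N0 l in auto)
    also have "\<dots> = y l" unfolding y_def mlin_def X0 XN using N0 by (simp add: field_simps)
    finally show ?thesis .
  qed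
  have hs: "(\<Sum>k<N. h k) = Tp - Tm"
    unfolding h_def using sum_lessThan_telescope[of X N] X0 XN by simp
  have Y: "(\<Sum>k<N. h k * (y (k+1) - y k)) = (\<Sum>k<N. (h k)^2) - (Tp - Tm)^2 / real N"
  proof -
    have yd: "y (k+1) - y k = h k - (Tp - Tm) / real N" for k
      unfolding y_def h_def mlin_def using N0 by (simp add: field_simps)
    have "(\<Sum>k<N. h k * (y (k+1) - y k)) = (\<Sum>k<N. (h k)^2 - (Tp - Tm) / real N * h k)"
    proof (rule sum.cong[OF refl])
      fix k show "h k * (y (k+1) - y k) = (h k)^2 - (Tp - Tm) / real N * h k"
        unfolding yd[of k] by (simp only: power2_eq_square right_diff_distrib mult.commute)
    qed
    also have "\<dots> = (\<Sum>k<N. (h k)^2) - (Tp - Tm) / real N * (\<Sum>k<N. h k)"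
      by (simp add: sum_subtractf sum_distrib_left)
    finally have "(\<Sum>k<N. h k * (y (k+1) - y k)) = (\<Sum>k<N. (h k)^2) - (Tp - Tm) / real N * (\<Sum>k<N. h k)" .
    then show ?thesis using hs by (simp add: power2_eq_square)
  qed
  have C: "(\<Sum>k<N. (h k)^2 * (Am N k k - Am N k (k+1) + Am N (k+1) (k+1)) / 3) \<le> (\<Sum>k<N. (h k)^2 * (real N / 2))"
  proof (rule sum_mono)
    fix k assume "k \<in> {..<N}"
    then have "Am N k k - Am N k (k+1) + Am N (k+1) (k+1) \<le> 3 * real N / 2" using Am_c by simp
    then have "(h k)^2 * (Am N k k - Am N k (k+1) + Am N (k+1) (k+1)) \<le> (h k)^2 * (3 * real N / 2)"
      by (intro mult_left_mono) auto
    then show "(h k)^2 * (Am N k k - Am N k (k+1) + Am N (k+1) (k+1)) / 3 \<le> (h k)^2 * (real N / 2)" by simp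
  qed
  have "(\<Sum>k<N. Tk X k) = - (\<Sum>k<N. h k * (S (k+1) - S k)) + (\<Sum>k<N. (h k)^2 * (Am N k k - Am N k (k+1) + Am N (k+1) (k+1)) / 3)"
    unfolding Tk_def h_def S_def by (simp add: sum.distrib sum_negf[symmetric]) (intro sum.cong refl; simp add: algebra_simps)
  also have "\<dots> \<le> - (\<Sum>k<N. h k * (S (k+1) - S k)) + (\<Sum>k<N. (h k)^2 * (real N / 2))"
    using C by simp
  also have "\<dots> = - (\<Sum>l\<in>{0..N}. y l * y l) + (Tp - Tm)^2 / 2"
  proof -
    have G': "(\<Sum>l\<in>{0..N}. y l * (\<Sum>k<N. h k * (Gf N l (k+1) - Gf N l k))) = (\<Sum>l\<in>{0..N}. y l * y l)"
      by (rule sum.cong[OF refl]) (simp only: G)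
    have H: "(\<Sum>k<N. (h k)^2 * (real N / 2)) = real N / 2 * (\<Sum>k<N. (h k)^2)"
      by (subst mult.commute) (rule sum_distrib_right[symmetric])
    show ?thesis unfolding A Y G' H using N0 by (simp add: field_simps)
  qed
  finally show ?thesis unfolding y_def by (simp add: power2_eq_square)
qed

end


context opsetup
begin

definition Yv :: "(nat \<Rightarrow> real) \<Rightarrow> real" where
  "Yv X = (\<Sum>l\<in>{0..N}. (X l - mlin N Tm Tp l)^2)"

lemma Yv_meas: "Yv \<in> borel_measurable (opinion_space N)"
  unfolding Yv_def
  by (intro borel_measurable_sum borel_measurable_power borel_measurable_diff borel_measurable_const comp_meas) auto

lemma var_bound:
  assumes pos: "0 < Tm" "0 < Tp"
  shows "integrable \<nu> Yv" "(\<integral>X. Yv X \<partial>\<nu>) \<le> (Tp - Tm)^2 / 2"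
proof -
  interpret prob_space \<nu> by (rule prob)
  define b where "b = max Tm Tp"
  have N0: "0 < N" using N2 by simp
  have AEg: "AE X in \<nu>. good b X"
    using AE_good support
    by (rule AE_mp[OF _ AE_mp]) (auto intro!: AE_I2 simp: good_def b_def)
  have Bd: "\<And>x. \<bar>fq N Tm Tp b x\<bar> \<le> (\<Sum>a\<in>{0..N}. \<Sum>c\<in>{0..N}. \<bar>Am N a c\<bar> * b * b)"
    by (rule fq_bound) (use N0 pos in \<open>auto simp: b_def\<close>)
  note gz = gen_zero[OF fq_meas Bd]
  have le: "AE X in \<nu>. Yv X \<le> (Tp - Tm)^2 / 2 - opinion_generator N (fq N Tm Tp b) X"
    using AEg
  proof (rule AE_mp, intro AE_I2 impI)
    fix X assume g: "good b X"
    show "Yv X \<le> (Tp - Tm)^2 / 2 - opinion_generator N (fq N Tm Tp b) X"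
      using gen_fq[OF g pos b_def] Tk_sum_bound[OF g] unfolding Yv_def by simp
  qed
  have Ybd: "AE X in \<nu>. norm (Yv X) \<le> real (N+1) * (b * b)"
    using AEg
  proof (rule AE_mp, intro AE_I2 impI)
    fix X assume g: "good b X"
    have "0 \<le> Yv X" unfolding Yv_def by (auto intro!: sum_nonneg)
    then have "\<bar>Yv X\<bar> = Yv X" by simp
    also have "\<dots> \<le> (\<Sum>l\<in>{0..N}. b * b)"
      unfolding Yv_def
    proof (rule sum_mono)
      fix l assume l: "l \<in> {0..N}"
      have "0 \<le> X l" "X l \<le> b" using g l unfolding good_def by auto
      moreover have "0 \<le> mlin N Tm Tp l" "mlin N Tm Tp l \<le> b" using mlin_bd[of l N Tm b Tp] l N0 pos by (auto simp: b_def)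
      ultimately have "\<bar>X l - mlin N Tm Tp l\<bar> \<le> b" by auto
      then have "\<bar>X l - mlin N Tm Tp l\<bar> * \<bar>X l - mlin N Tm Tp l\<bar> \<le> b * b" by (intro mult_mono) auto
      then show "(X l - mlin N Tm Tp l)^2 \<le> b * b" by (simp add: power2_eq_square abs_mult[symmetric])
    qed
    finally show "norm (Yv X) \<le> real (N+1) * (b * b)" by simp
  qed
  show iY: "integrable \<nu> Yv"
    by (rule integrable_const_bound[OF Ybd meas_nu[OF Yv_meas]])
  have "(\<integral>X. Yv X \<partial>\<nu>) \<le> (\<integral>X. (Tp - Tm)^2 / 2 - opinion_generator N (fq N Tm Tp b) X \<partial>\<nu>)"
    by (rule integral_mono_AE[OF iY _ le]) (use gz(1) in auto)
  also have "\<dots> = (Tp - Tm)^2 / 2"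
    using gz by (simp add: prob_space)
  finally show "(\<integral>X. Yv X \<partial>\<nu>) \<le> (Tp - Tm)^2 / 2" .
qed

end


context opsetup
begin

lemma meas_bound:
  fixes \<psi> :: "real \<Rightarrow> real" and I Bp \<epsilon> :: real
  assumes pos: "0 < Tm" "0 < Tp" and Bp: "0 < Bp" "\<And>x. x \<in> {0..1} \<Longrightarrow> \<bar>\<psi> x\<bar> \<le> Bp"
    and eps: "0 < \<epsilon>"
    and dI: "\<bar>(1 / real N) * (\<Sum>k=0..N. \<psi> (real k / real N) * mlin N Tm Tp k) - I\<bar> \<le> \<epsilon> / 2"
  shows "measure \<nu> {X \<in> space \<nu>. \<bar>(1 / real N) * (\<Sum>k=0..N. \<psi> (real k / real N) * X k) - I\<bar> > \<epsilon>}
     \<le> ((Tp - Tm)^2 / 2) * (8 * Bp^2 / \<epsilon>^2) / real N"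
proof -
  interpret prob_space \<nu> by (rule prob)
  have N0: "0 < N" and N1: "1 \<le> N" using N2 by auto
  define t where "t = \<epsilon>^2 * (real N)^2 / (4 * (real N + 1) * Bp^2)"
  have tpos: "0 < t" unfolding t_def using eps Bp N0 by simp
  have sub: "{X \<in> space \<nu>. \<bar>(1 / real N) * (\<Sum>k=0..N. \<psi> (real k / real N) * X k) - I\<bar> > \<epsilon>}
      \<subseteq> {X \<in> space \<nu>. Yv X \<ge> t}"
  proof safe
    fix X assume X: "X \<in> space \<nu>" and gt: "\<epsilon> < \<bar>(1 / real N) * (\<Sum>k=0..N. \<psi> (real k / real N) * X k) - I\<bar>"
    define Z where "Z = (\<Sum>k=0..N. \<psi> (real k / real N) * (X k - mlin N Tm Tp k))"
    have "(1 / real N) * (\<Sum>k=0..N. \<psi> (real k / real N) * X k)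
        = (1 / real N) * (\<Sum>k=0..N. \<psi> (real k / real N) * mlin N Tm Tp k) + Z / real N"
    proof -
      have "(\<Sum>k=0..N. \<psi> (real k / real N) * X k) = (\<Sum>k=0..N. \<psi> (real k / real N) * mlin N Tm Tp k) + Z"
        unfolding Z_def sum.distrib[symmetric] by (rule sum.cong) (auto simp: algebra_simps)
      then show ?thesis by (simp add: add_divide_distrib)
    qed
    then have "\<epsilon> / 2 < \<bar>Z / real N\<bar>" using gt dI by linarith
    then have h1: "\<epsilon> / 2 * real N < \<bar>Z\<bar>" using N0 by (simp add: field_simps)
    have "0 \<le> \<epsilon> / 2 * real N" using eps by simp
    then have "(\<epsilon> / 2 * real N)^2 < \<bar>Z\<bar>^2"
      using h1 by (intro power_strict_mono) auto
    then have h2: "(\<epsilon> / 2 * real N)^2 < Z^2" by simp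
    have cs: "Z^2 \<le> (\<Sum>k=0..N. (\<psi> (real k / real N))^2) * (\<Sum>k=0..N. (X k - mlin N Tm Tp k)^2)"
      unfolding Z_def by (rule Cauchy_Schwarz_ineq_sum)
    have ps: "(\<Sum>k=0..N. (\<psi> (real k / real N))^2) \<le> (\<Sum>k=0..N. Bp^2)"
    proof (rule sum_mono)
      fix k assume k: "k \<in> {0..N}"
      have "real k / real N \<in> {0..1}" using k N0 by auto
      then have "\<bar>\<psi> (real k / real N)\<bar> \<le> Bp" using Bp by auto
      then show "(\<psi> (real k / real N))^2 \<le> Bp^2"
        by (metis abs_ge_zero power2_abs power_mono)
    qed
    have Ynn: "0 \<le> Yv X" unfolding Yv_def by (auto intro!: sum_nonneg)
    have "Z^2 \<le> (real N + 1) * Bp^2 * Yv X"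
    proof -
      have "Z^2 \<le> (\<Sum>k=0..N. (\<psi> (real k / real N))^2) * Yv X" using cs unfolding Yv_def .
      also have "\<dots> \<le> (\<Sum>k=0..N. Bp^2) * Yv X" by (rule mult_right_mono[OF ps Ynn])
      finally show ?thesis by (simp add: add.commute)
    qed
    then have "(\<epsilon> / 2 * real N)^2 < (real N + 1) * Bp^2 * Yv X" using h2 by linarith
    moreover have "\<epsilon>^2 * (real N)^2 = 4 * (\<epsilon> / 2 * real N)^2" by (simp add: power2_eq_square)
    moreover have "0 < 4 * (real N + 1) * Bp^2" using Bp by simp
    moreover have "Yv X * (4 * (real N + 1) * Bp^2) = 4 * ((real N + 1) * Bp^2 * Yv X)" by (simp only: mult_ac)
    ultimately have k: "\<epsilon>^2 * (real N)^2 \<le> Yv X * (4 * (real N + 1) * Bp^2)" by linarith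
    show "t \<le> Yv X" unfolding t_def
      using pos_divide_le_eq[OF \<open>0 < 4 * (real N + 1) * Bp^2\<close>] k by blast
  qed
  have mY: "Yv \<in> borel_measurable \<nu>" by (rule meas_nu[OF Yv_meas])
  have "measure \<nu> {X \<in> space \<nu>. \<bar>(1 / real N) * (\<Sum>k=0..N. \<psi> (real k / real N) * X k) - I\<bar> > \<epsilon>}
      \<le> measure \<nu> {X \<in> space \<nu>. Yv X \<ge> t}"
    by (rule finite_measure_mono[OF sub]) (use mY in measurable)
  also have "\<dots> \<le> (\<integral>X. Yv X \<partial>\<nu>) / t"
    by (rule integral_Markov_inequality_measure[OF var_bound(1)[OF pos] sets.top _ tpos])
       (auto intro!: AE_I2 simp: Yv_def intro: sum_nonneg)
  also have "\<dots> \<le> ((Tp - Tm)^2 / 2) / t"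
    by (rule divide_right_mono[OF var_bound(2)[OF pos]]) (use tpos in simp)
  also have "\<dots> \<le> ((Tp - Tm)^2 / 2) * (8 * Bp^2 / \<epsilon>^2) / real N"
  proof -
    have "((Tp - Tm)^2 / 2) / t = ((Tp - Tm)^2 / 2) * (4 * (real N + 1) * Bp^2 / (\<epsilon>^2 * (real N)^2))"
      unfolding t_def by simp
    also have "\<dots> \<le> ((Tp - Tm)^2 / 2) * (8 * Bp^2 / \<epsilon>^2 / real N)"
    proof (rule mult_left_mono)
      have a: "4 * (real N + 1) * Bp^2 / (\<epsilon>^2 * (real N)^2) = (Bp^2 / \<epsilon>^2) * (4 * (real N + 1) / (real N)^2)"
        by simp
      have b: "8 * Bp^2 / \<epsilon>^2 / real N = (Bp^2 / \<epsilon>^2) * (8 / real N)" by simp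
      have c: "4 * (real N + 1) / (real N)^2 \<le> 8 / real N"
      proof -
        have "4 * (real N + 1) \<le> 8 * real N" using N1 by simp
        then have "4 * (real N + 1) / (real N)^2 \<le> 8 * real N / (real N)^2"
          by (rule divide_right_mono) simp
        also have "8 * real N / (real N)^2 = 8 / real N" using N0 by (simp add: power2_eq_square)
        finally show ?thesis .
      qed
      show "4 * (real N + 1) * Bp^2 / (\<epsilon>^2 * (real N)^2) \<le> 8 * Bp^2 / \<epsilon>^2 / real N"
        unfolding a b by (rule mult_left_mono[OF c]) simp
    qed simp
    finally show ?thesis by simp
  qed
  finally show ?thesis .
qed

end


lemma integral_pieces:
  fixes g :: "real \<Rightarrow> real"
  assumes g: "continuous_on {0..1} g" and N: "0 < N" and n: "n \<le> N"
  shows "integral {0..real n / real N} g = (\<Sum>k<n. integral {real k / real N..real (k+1) / real N} g)"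
  using n
proof (induction n)
  case 0 then show ?case by simp
next
  case (Suc n)
  have le: "real (Suc n) / real N \<le> 1" using Suc.prems N by simp
  have i: "g integrable_on {0..real (Suc n) / real N}"
    by (rule integrable_continuous_real, rule continuous_on_subset[OF g]) (use le in auto)
  have "integral {0..real n / real N} g + integral {real n / real N..real (Suc n) / real N} g = integral {0..real (Suc n) / real N} g"
    by (rule Henstock_Kurzweil_Integration.integral_combine[OF _ _ i]) (use N in \<open>auto simp: divide_right_mono\<close>)
  then show ?case using Suc by simp
qed

lemma piece_bound:
  fixes g :: "real \<Rightarrow> real"
  assumes i: "g integrable_on {a..b}" and ab: "a \<le> b" and bd: "\<And>x. x \<in> {a..b} \<Longrightarrow> \<bar>g x - g a\<bar> \<le> w"
  shows "\<bar>integral {a..b} g - g a * (b - a)\<bar> \<le> w * (b - a)"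
proof -
  have "integral {a..b} (\<lambda>x. g x - g a) = integral {a..b} g - g a * (b - a)"
    using integral_diff[OF i integrable_const_ivl[of "g a" a b]] ab by (simp add: mult.commute)
  moreover have "norm (integral {a..b} (\<lambda>x. g x - g a)) \<le> integral {a..b} (\<lambda>x. w)"
    by (rule integral_norm_bound_integral) (use i bd in \<open>auto intro!: integrable_diff\<close>)
  ultimately show ?thesis using ab by (simp add: mult.commute)
qed

lemma riemann_sum:
  fixes g :: "real \<Rightarrow> real"
  assumes g: "continuous_on {0..1} g"
  shows "(\<lambda>N. (1 / real N) * (\<Sum>k=0..N. g (real k / real N))) \<longlonglongrightarrow> integral {0..1} g"
proof (rule LIMSEQ_I)
  fix e :: real assume e: "0 < e"
  have uc: "uniformly_continuous_on {0..1} g" by (rule compact_uniformly_continuous[OF g compact_Icc])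
  obtain d where d: "0 < d" and dd: "\<And>x y. x \<in> {0..1} \<Longrightarrow> y \<in> {0..1} \<Longrightarrow> dist y x < d \<Longrightarrow> dist (g y) (g x) < e / 2"
    using uc e unfolding uniformly_continuous_on_def by (metis half_gt_zero)
  obtain B where B0: "\<forall>x\<in>{0..1}. \<bar>g x\<bar> \<le> B"
    using compact_imp_bounded[OF compact_continuous_image[OF g compact_Icc]] unfolding bounded_iff by auto
  have B: "\<And>x. x \<in> {0..1} \<Longrightarrow> \<bar>g x\<bar> \<le> B" using B0 by blast
  obtain M :: nat where M: "max (1 / d) (2 * (\<bar>B\<bar> + 1) / e) < real M" using reals_Archimedean2 by blast
  show "\<exists>no. \<forall>n\<ge>no. norm ((1 / real n) * (\<Sum>k=0..n. g (real k / real n)) - integral {0..1} g) < e"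
  proof (intro exI allI impI)
    fix N assume NM: "M \<le> N"
    have Mpos: "0 < real M" using M d e by (smt (verit) divide_pos_pos less_max_iff_disj)
    then have N: "0 < N" using NM by simp
    have Nd: "1 / real N < d"
    proof -
      have "1 / d < real N" using M NM by (smt (verit) of_nat_mono)
      then show ?thesis using d N by (simp add: field_simps)
    qed
    have NB: "\<bar>B\<bar> / real N < e / 2"
    proof -
      have "2 * (\<bar>B\<bar> + 1) / e < real N" using M NM by (smt (verit) of_nat_mono)
      then have "2 * (\<bar>B\<bar> + 1) < real N * e" using e by (simp add: field_simps)
      then show ?thesis using N e by (simp add: field_simps)
    qed
    define I where "I k = integral {real k / real N..real (k+1) / real N} g" for k
    have tot: "integral {0..1} g = (\<Sum>k<N. I k)"
      using integral_pieces[OF g N, of N] N unfolding I_def by simp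
    have pk: "\<bar>I k - g (real k / real N) / real N\<bar> \<le> (e/2) / real N" if k: "k < N" for k
    proof -
      have kk: "real (k+1) / real N \<le> 1" using k N by simp
      have i: "g integrable_on {real k / real N..real (k+1) / real N}"
        by (rule integrable_continuous_real, rule continuous_on_subset[OF g]) (use kk in auto)
      have len: "real (k+1) / real N - real k / real N = 1 / real N" using N by (simp add: field_simps)
      have "\<bar>I k - g (real k / real N) * (real (k+1) / real N - real k / real N)\<bar> \<le> (e/2) * (real (k+1) / real N - real k / real N)"
        unfolding I_def
      proof (rule piece_bound[OF i])
        show "real k / real N \<le> real (k+1) / real N" using N by (simp add: divide_right_mono)
        fix x assume x: "x \<in> {real k / real N..real (k+1) / real N}"
        have k0: "0 \<le> real k / real N" by simp
        have "0 \<le> x" "x \<le> 1" using x kk k0 by (meson atLeastAtMost_iff order_trans)+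
        then have x01: "x \<in> {0..1}" by auto
        have k01: "real k / real N \<in> {0..1}" using k by auto
        have "dist x (real k / real N) < d" using x Nd len by (auto simp: dist_real_def)
        then show "\<bar>g x - g (real k / real N)\<bar> \<le> e / 2"
          using dd[OF k01 x01] by (simp add: dist_real_def)
      qed
      then show ?thesis using len by simp
    qed
    have "\<bar>(\<Sum>k<N. g (real k / real N) / real N) - (\<Sum>k<N. I k)\<bar> \<le> (\<Sum>k<N. (e/2) / real N)"
    proof -
      have "\<bar>(\<Sum>k<N. g (real k / real N) / real N) - (\<Sum>k<N. I k)\<bar> = \<bar>\<Sum>k<N. (I k - g (real k / real N) / real N)\<bar>"
        by (simp add: sum_subtractf abs_minus_commute)
      also have "\<dots> \<le> (\<Sum>k<N. \<bar>I k - g (real k / real N) / real N\<bar>)" by (rule sum_abs)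
      also have "\<dots> \<le> (\<Sum>k<N. (e/2) / real N)" by (rule sum_mono) (use pk in auto)
      finally show ?thesis .
    qed
    also have "\<dots> = e / 2" using N by simp
    finally have main: "\<bar>(\<Sum>k<N. g (real k / real N) / real N) - integral {0..1} g\<bar> \<le> e / 2" using tot by simp
    have split: "(1 / real N) * (\<Sum>k=0..N. g (real k / real N)) = (\<Sum>k<N. g (real k / real N) / real N) + g 1 / real N"
    proof -
      have "(\<Sum>k=0..N. g (real k / real N)) = (\<Sum>k<N. g (real k / real N)) + g (real N / real N)"
        by (simp add: atLeast0AtMost lessThan_Suc_atMost[symmetric])
      then show ?thesis using N by (simp add: sum_divide_distrib[symmetric] field_simps)
    qed
    have c: "\<bar>g 1 / real N\<bar> \<le> \<bar>B\<bar> / real N" using B[of 1] N by (simp add: divide_right_mono)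
    have t: "\<bar>(\<Sum>k<N. g (real k / real N) / real N) + g 1 / real N - integral {0..1} g\<bar>
       \<le> \<bar>(\<Sum>k<N. g (real k / real N) / real N) - integral {0..1} g\<bar> + \<bar>g 1 / real N\<bar>"
      by (rule order_trans[OF _ abs_triangle_ineq]) (simp add: algebra_simps)
    show "norm ((1 / real N) * (\<Sum>k=0..N. g (real k / real N)) - integral {0..1} g) < e"
      unfolding split real_norm_def using t c main NB by linarith
  qed
qed


theorem theorem2p8:
  fixes Tm Tp :: real and \<nu> :: "nat \<Rightarrow> (nat \<Rightarrow> real) measure"
    and \<psi> :: "real \<Rightarrow> real" and \<epsilon> :: real
  assumes "Tm > 0" and "Tp > 0"
    and "\<And>N. N \<ge> 2 \<Longrightarrow> opinion_invariant N Tm Tp (\<nu> N)"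
    and "\<epsilon> > 0"
    and "continuous_on {0..1} \<psi>"
  shows "(\<lambda>N. measure (\<nu> N)
            {X \<in> space (\<nu> N).
               \<bar>(1 / real N) * (\<Sum>k=0..N. \<psi> (real k / real N) * X k)
                 - integral {0..1} (\<lambda>x. \<psi> x * (Tm + x * (Tp - Tm)))\<bar> > \<epsilon>})
         \<longlonglongrightarrow> 0"
proof -
  define g where "g x = \<psi> x * (Tm + x * (Tp - Tm))" for x
  define I where "I = integral {0..1} g"
  have gc: "continuous_on {0..1} g" unfolding g_def by (intro continuous_intros assms(5))
  have dlim: "(\<lambda>N. (1 / real N) * (\<Sum>k=0..N. g (real k / real N))) \<longlonglongrightarrow> I"
    unfolding I_def by (rule riemann_sum[OF gc])
  obtain B0 where B0: "\<forall>x\<in>{0..1}. \<bar>\<psi> x\<bar> \<le> B0"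
    using compact_imp_bounded[OF compact_continuous_image[OF assms(5) compact_Icc]] unfolding bounded_iff by auto
  define Bp where "Bp = \<bar>B0\<bar> + 1"
  have Bp: "0 < Bp" "\<And>x. x \<in> {0..1} \<Longrightarrow> \<bar>\<psi> x\<bar> \<le> Bp" using B0 unfolding Bp_def by force+
  define K where "K = ((Tp - Tm)^2 / 2) * (8 * Bp^2 / \<epsilon>^2)"
  have ev1: "eventually (\<lambda>N. dist ((1 / real N) * (\<Sum>k=0..N. g (real k / real N))) I < \<epsilon> / 2) sequentially"
    using dlim assms(4) unfolding tendsto_iff by (meson half_gt_zero)
  have ev: "eventually (\<lambda>N. measure (\<nu> N)
            {X \<in> space (\<nu> N).
               \<bar>(1 / real N) * (\<Sum>k=0..N. \<psi> (real k / real N) * X k)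
                 - integral {0..1} (\<lambda>x. \<psi> x * (Tm + x * (Tp - Tm)))\<bar> > \<epsilon>} \<le> K / real N) sequentially"
    using ev1 eventually_ge_at_top[of 2]
  proof eventually_elim
    case (elim N)
    interpret opsetup N Tm Tp "\<nu> N"
      by unfold_locales (use elim assms(3) in auto)
    have dI: "\<bar>(1 / real N) * (\<Sum>k=0..N. \<psi> (real k / real N) * mlin N Tm Tp k) - I\<bar> \<le> \<epsilon> / 2"
      using elim(1) unfolding g_def mlin_def dist_real_def by simp
    show ?case
      using meas_bound[OF assms(1,2) Bp assms(4) dI] unfolding K_def I_def g_def by simp
  qed
  have ev0: "eventually (\<lambda>N. 0 \<le> measure (\<nu> N)
            {X \<in> space (\<nu> N).
               \<bar>(1 / real N) * (\<Sum>k=0..N. \<psi> (real k / real N) * X k)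
                 - integral {0..1} (\<lambda>x. \<psi> x * (Tm + x * (Tp - Tm)))\<bar> > \<epsilon>}) sequentially"
    by simp
  show ?thesis
    by (rule real_tendsto_sandwich[OF ev0 ev tendsto_const lim_const_over_n])
qed


end
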